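(* Suppose an sAEDS has $M_s:=N/N_s$ an integer for every $s\in\mathcal S$, satisfies $|\mathcal F^+_x|=M_s$ for every $x\in\mathcal X_s$ and every $s$, and, for a stationary distribution $Q$ of its state chain, uses for each $x\in\mathcal X_s$ a phased-in code on $\mathcal F^+_x$ with $M_s$ codewords matched to $Q$ restricted to $\mathcal F^+_x$ (i.e. $\hat x\mapsto E_{\hat x}(s)$ on $\mathcal F^+_x$ is this code). Then its average code length satisfies $$L\le H(p)+D(p\|q)+\sigma,\qquad \sigma=\lg\lg e+1-\lg e\approx0.08607.$$
   Context: Let $\mathcal S$ be a finite alphabet with $|\mathcal S|\ge 2$ and $p=\{p(s)\}$ a probability distribution with $p(s)>0$ for all $s$ (i.i.d. source). $\mathcal B=\{0,1\}^*$ (including the empty word), $l(\beta)$ the word length, $\lg=\log_2$. An AEDS with finite state set $\mathcal X$, $|\mathcal X|=N$, consists of maps $E_{\hat x}:\mathcal S\to\mathcal B$ and $F^-_{\hat x}:\mathcal S\to\mathcal X$ ($\hat x\in\mathcal X$) such that for every $x\in\mathcal X$ the words $E_{\hat x}(s)$ over all pairs $(\hat x,s)$ with $F^-_{\hat x}(s)=x$ are pairwise distinct and form a prefix-free set. The state chain is the Markov chain on $\mathcal X$ moving from $\hat x$ to $F^-_{\hat x}(s)$ with probability $p(s)$; for a stationary distribution $Q$ the average code length is $L=\sum_{\hat x}\sum_s p(s)Q(\hat x)l(E_{\hat x}(s))$. A state-divided AEDS (sAEDS) is an AEDS for which the sets $\mathcal X_s=\{F^-_{\hat x}(s):\hat x\in\mathcal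 X\}$ are pairwise disjoint with union $\mathcal X$; $N_s=|\mathcal X_s|$, $q(s)=N_s/N$. For $x\in\mathcal X_s$, $\mathcal F^+_x=\{\hat x: F^-_{\hat x}(s)=x\}$; for each $s$ these sets partition $\mathcal X$. An sAEDS is thus specified by the partitions and, for each $x\in\mathcal X_s$, an injective prefix-free code $\hat x\mapsto E_{\hat x}(s)$ on $\mathcal F^+_x$; the state chain (hence $Q$) depends only on $p$ and the partitions. Phased-in code: for an integer $M\ge1$ and $k=\lceil\lg M\rceil$, a prefix-free code on an $M$-element set with $2^k-M$ codewords of length $k-1$ and $2M-2^k$ codewords of length $k$ (for $M=1$, the single empty word). It is matched to a distribution on that set if the length-$(k-1)$ codewords go to $2^k-M$ elements of largest probability. $H(p)=-\sum_s p(s)\lg p(s)$, $D(p\|q)=\sum_s p(s)\lg(p(s)/q(s))$. *)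

theory Defs
  imports Complex_Main "HOL-Library.Sublist"
begin

text \<open>States: finite type 'x (N = CARD('x)); alphabet: finite type 's.
  E xh s : codeword E_{xh}(s); F xh s : next state F^-_{xh}(s).\<close>

definition AEDS :: "('x::finite \<Rightarrow> 's::finite \<Rightarrow> bool list) \<Rightarrow> ('x \<Rightarrow> 's \<Rightarrow> 'x) \<Rightarrow> bool" where
  "AEDS E F \<longleftrightarrow> (\<forall>x. \<forall>a s b t. F a s = x \<and> F b t = x \<and> (a, s) \<noteq> (b, t)
       \<longrightarrow> \<not> prefix (E a s) (E b t))"

definition Xs :: "('x::finite \<Rightarrow> 's \<Rightarrow> 'x) \<Rightarrow> 's \<Rightarrow> 'x set" where
  "Xs F s = {F xh s | xh. True}"

definition sAEDS :: "('x::finite \<Rightarrow> 's::finite \<Rightarrow> bool list) \<Rightarrow> ('x \<Rightarrow> 's \<Rightarrow> 'x) \<Rightarrow> bool" where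
  "sAEDS E F \<longleftrightarrow> AEDS E F \<and> (\<forall>s t. s \<noteq> t \<longrightarrow> Xs F s \<inter> Xs F t = {})
       \<and> (\<Union>s. Xs F s) = UNIV"

definition Fplus :: "('x \<Rightarrow> 's \<Rightarrow> 'x) \<Rightarrow> 's \<Rightarrow> 'x \<Rightarrow> 'x set" where
  "Fplus F s x = {xh. F xh s = x}"

definition Ns :: "('x::finite \<Rightarrow> 's \<Rightarrow> 'x) \<Rightarrow> 's \<Rightarrow> nat" where
  "Ns F s = card (Xs F s)"

definition qdist :: "('x::finite \<Rightarrow> 's \<Rightarrow> 'x) \<Rightarrow> 's \<Rightarrow> real" where
  "qdist F s = real (Ns F s) / real (card (UNIV :: 'x set))"

definition stationary :: "('s::finite \<Rightarrow> real) \<Rightarrow> ('x::finite \<Rightarrow> 's \<Rightarrow> 'x) \<Rightarrow> ('x \<Rightarrow> real) \<Rightarrow> bool" where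
  "stationary p F Q \<longleftrightarrow> (\<forall>x. Q x \<ge> 0) \<and> (\<Sum>x\<in>UNIV. Q x) = 1
     \<and> (\<forall>x. Q x = (\<Sum>xh\<in>UNIV. \<Sum>s\<in>{s. F xh s = x}. Q xh * p s))"

definition avg_len :: "('s::finite \<Rightarrow> real) \<Rightarrow> ('x::finite \<Rightarrow> real) \<Rightarrow> ('x \<Rightarrow> 's \<Rightarrow> bool list) \<Rightarrow> real" where
  "avg_len p Q E = (\<Sum>xh\<in>UNIV. \<Sum>s\<in>UNIV. p s * Q xh * real (length (E xh s)))"

text \<open>Lengths k-1 are encoded
  as "length + 1 = k" to avoid natural-number truncation (M = 1 gives k = 0).\<close>
definition phased_in_code :: "('a \<Rightarrow> bool list) \<Rightarrow> 'a set \<Rightarrow> nat \<Rightarrow> bool" where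
  "phased_in_code C A M \<longleftrightarrow> M \<ge> 1 \<and> finite A \<and> card A = M \<and> inj_on C A
     \<and> (\<forall>a\<in>A. \<forall>b\<in>A. a \<noteq> b \<longrightarrow> \<not> prefix (C a) (C b))
     \<and> (let k = nat \<lceil>log 2 (real M)\<rceil> in
          (\<forall>a\<in>A. length (C a) = k \<or> length (C a) + 1 = k)
          \<and> card {a\<in>A. length (C a) + 1 = k} = 2 ^ k - M
          \<and> card {a\<in>A. length (C a) = k} = 2 * M - 2 ^ k)"

definition matched_phased_in_code :: "('a \<Rightarrow> bool list) \<Rightarrow> 'a set \<Rightarrow> nat \<Rightarrow> ('a \<Rightarrow> real) \<Rightarrow> bool" where
  "matched_phased_in_code C A M P \<longleftrightarrow> phased_in_code C A M
     \<and> (\<forall>a\<in>A. \<forall>b\<in>A. length (C a) < length (C b) \<longrightarrow> P a \<ge> P b)"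

definition entropy :: "('s::finite \<Rightarrow> real) \<Rightarrow> real" where
  "entropy p = - (\<Sum>s\<in>UNIV. p s * log 2 (p s))"

definition KL_div :: "('s::finite \<Rightarrow> real) \<Rightarrow> ('s \<Rightarrow> real) \<Rightarrow> real" where
  "KL_div p q = (\<Sum>s\<in>UNIV. p s * log 2 (p s / q s))"

end

theory Submission
  imports Defs
begin

lemma sigma_bound:
  fixes y :: real assumes "y > 0"
  shows "log 2 y + 1 - y \<le> log 2 (log 2 (exp 1)) + 1 - log 2 (exp 1)"
proof -
  define c where "c = ln (2::real)"
  have c: "c > 0" unfolding c_def by simp
  have e1: "log 2 (exp 1) = 1 / c" unfolding c_def log_def by simp
  have e2: "log 2 (1/c) = - ln c / c" unfolding c_def log_def by (simp add: ln_div)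
  have e3: "log 2 y = ln y / c" unfolding c_def log_def by simp
  have "ln (c*y) \<le> c*y - 1" using ln_le_minus_one[of "c*y"] c assms by simp
  hence "ln y + ln c \<le> c*y - 1" using c assms by (simp add: ln_mult)
  hence "(ln y + ln c)/c \<le> (c*y - 1)/c" using c by (simp add: divide_right_mono)
  hence "ln y / c - y \<le> - ln c / c - 1/c" using c by (simp add: field_simps)
  thus ?thesis using e1 e2 e3 by simp
qed

lemma fiber_bound:
  assumes m: "matched_phased_in_code C A M P" and P: "\<And>a. a \<in> A \<Longrightarrow> P a \<ge> 0"
  shows "(\<Sum>a\<in>A. P a * real (length (C a))) \<le> (\<Sum>a\<in>A. P a) *
     (log 2 (real M) + (log 2 (log 2 (exp 1)) + 1 - log 2 (exp 1)))"
proof -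
  define k where "k = nat \<lceil>log 2 (real M)\<rceil>"
  define S where "S = {a\<in>A. length (C a) + 1 = k}"
  define T where "T = {a\<in>A. length (C a) = k}"
  have M1: "M \<ge> 1" and fin: "finite A" and cA: "card A = M"
    and len: "\<And>a. a\<in>A \<Longrightarrow> length (C a) = k \<or> length (C a) + 1 = k"
    and cS: "card S = 2^k - M" and cT: "card T = 2*M - 2^k"
    and mt: "\<And>a b. a\<in>A \<Longrightarrow> b\<in>A \<Longrightarrow> length (C a) < length (C b) \<Longrightarrow> P a \<ge> P b"
    using m unfolding matched_phased_in_code_def phased_in_code_def Let_def k_def S_def T_def
    by auto
  have AST: "A = S \<union> T" and disj: "S \<inter> T = {}" using len unfolding S_def T_def by auto
  have finS: "finite S" and finT: "finite T" using fin unfolding S_def T_def by auto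
  have cST: "real (card S) + real (card T) = real M"
    using card_Un_disjoint[OF finS finT disj] AST cA by simp
  have lgk: "log 2 (real M) \<le> real k" unfolding k_def using M1 by linarith
  have "real M = 2 powr (log 2 (real M))" using M1 by simp
  also have "\<dots> \<le> 2 powr (real k)" using lgk by simp
  finally have Mk: "real M \<le> 2^k" by (simp add: powr_realpow)
  have cSr: "real (card S) = 2^k - real M"
  proof -
    have "M \<le> 2^k" using Mk by (metis of_nat_le_iff of_nat_numeral of_nat_power)
    thus ?thesis using cS by (simp add: of_nat_diff)
  qed
  define W where "W = (\<Sum>a\<in>A. P a)"
  define PS where "PS = (\<Sum>a\<in>S. P a)"
  define PT where "PT = (\<Sum>a\<in>T. P a)"
  have W: "W = PS + PT" unfolding W_def PS_def PT_def using AST sum.union_disjoint[OF finS finT disj] by simp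
  have W0: "W \<ge> 0" unfolding W_def using P by (simp add: sum_nonneg)
  have "0 \<le> (\<Sum>a\<in>S. \<Sum>b\<in>T. P a - P b)"
  proof (intro sum_nonneg)
    fix a b assume "a \<in> S" "b \<in> T"
    thus "0 \<le> P a - P b" using mt[of a b] unfolding S_def T_def by auto
  qed
  also have "\<dots> = real (card T) * PS - real (card S) * PT"
    unfolding PS_def PT_def by (simp add: sum_subtractf sum_distrib_left sum_distrib_right mult.commute)
  finally have key: "real (card S) * PT \<le> real (card T) * PS" by simp
  have MPS: "real (card S) * W \<le> real M * PS"
  proof -
    have "real (card S) * W = real (card S) * PS + real (card S) * PT" using W by (simp add: distrib_left)
    also have "\<dots> \<le> real (card S) * PS + real (card T) * PS" using key by linarith
    also have "\<dots> = (real (card S) + real (card T)) * PS" by (simp add: distrib_right)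
    finally show ?thesis using cST by simp
  qed
  have sumlen: "(\<Sum>a\<in>A. P a * real (length (C a))) = real k * W - PS"
  proof -
    have "(\<Sum>a\<in>A. P a * real (length (C a))) = (\<Sum>a\<in>S. P a * real (length (C a))) + (\<Sum>a\<in>T. P a * real (length (C a)))"
      using AST sum.union_disjoint[OF finS finT disj] by simp
    also have "(\<Sum>a\<in>S. P a * real (length (C a))) = (\<Sum>a\<in>S. P a * real k - P a)"
      by (rule sum.cong) (auto simp: S_def algebra_simps)
    also have "(\<Sum>a\<in>T. P a * real (length (C a))) = (\<Sum>a\<in>T. P a * real k)"
      by (rule sum.cong) (auto simp: T_def)
    finally show ?thesis unfolding W PS_def PT_def
      by (simp add: sum_subtractf sum_distrib_left[symmetric] sum_distrib_right[symmetric] algebra_simps)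
  qed
  have Mpos: "real M > 0" using M1 by simp
  have "(2^k - real M) / real M * W = real (card S) * W / real M" using cSr by simp
  also have "\<dots> \<le> PS" using MPS Mpos by (simp add: divide_le_eq mult.commute)
  finally have "PS \<ge> (2^k - real M) / real M * W" .
  hence "real k * W - PS \<le> W * (real k + 1 - 2^k / real M)"
    using Mpos by (simp add: field_simps)
  also have "\<dots> \<le> W * (log 2 (real M) + (log 2 (log 2 (exp 1)) + 1 - log 2 (exp 1)))"
  proof (rule mult_left_mono[OF _ W0])
    define y where "y = 2^k / real M"
    have y: "y > 0" unfolding y_def using Mpos by simp
    have "log 2 y = real k - log 2 (real M)" unfolding y_def using Mpos
      by (simp add: log_divide log_nat_power)
    thus "real k + 1 - 2 ^ k / real M \<le> log 2 (real M) + (log 2 (log 2 (exp 1)) + 1 - log 2 (exp 1))"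
      using sigma_bound[OF y] unfolding y_def by simp
  qed
  finally show ?thesis using sumlen W_def by simp
qed


theorem theorem4:
  fixes p :: "'s::finite \<Rightarrow> real"
    and E :: "'x::finite \<Rightarrow> 's \<Rightarrow> bool list"
    and F :: "'x \<Rightarrow> 's \<Rightarrow> 'x"
    and Q :: "'x \<Rightarrow> real"
  assumes "card (UNIV :: 's set) \<ge> 2"
    and "\<And>s. p s > 0"
    and "(\<Sum>s\<in>UNIV. p s) = 1"
    and "sAEDS E F"
    and "\<And>s. Ns F s dvd card (UNIV :: 'x set)"
    and "\<And>s x. x \<in> Xs F s \<Longrightarrow> card (Fplus F s x) = card (UNIV :: 'x set) div Ns F s"
    and "stationary p F Q"
    and "\<And>s x. x \<in> Xs F s \<Longrightarrow>
           matched_phased_in_code (\<lambda>xh. E xh s) (Fplus F s x) (card (UNIV :: 'x set) div Ns F s) Q"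
  shows "avg_len p Q E \<le> entropy p + KL_div p (qdist F)
           + (log 2 (log 2 (exp 1)) + 1 - log 2 (exp 1))"
proof -
  define \<sigma> where "\<sigma> = log 2 (log 2 (exp 1)) + 1 - log 2 (exp 1)"
  define N where "N = card (UNIV :: 'x set)"
  define Ms where "Ms s = N div Ns F s" for s
  have Q0: "\<And>x. Q x \<ge> 0" and Q1: "(\<Sum>x\<in>UNIV. Q x) = 1" using assms(7) unfolding stationary_def by (blast, blast)
  have Npos: "N > 0" unfolding N_def by (simp add: finite_UNIV_card_ge_0)
  have Nspos: "Ns F s > 0" for s
  proof -
    have "F undefined s \<in> Xs F s" unfolding Xs_def by auto
    hence "Xs F s \<noteq> {}" by auto
    thus ?thesis unfolding Ns_def by (simp add: card_gt_0_iff)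
  qed
  have NMs: "N = Ns F s * Ms s" for s using assms(5)[of s] unfolding Ms_def N_def by simp
  have Mspos: "Ms s > 0" for s using NMs[of s] Npos by (metis gr0I mult_0_right)
  have per_s: "(\<Sum>xh\<in>UNIV. Q xh * real (length (E xh s))) \<le> log 2 (real (Ms s)) + \<sigma>" for s
  proof -
    have "(\<Sum>xh\<in>UNIV. Q xh * real (length (E xh s)))
        = (\<Sum>x\<in>Xs F s. \<Sum>xh\<in>{xh\<in>UNIV. F xh s = x}. Q xh * real (length (E xh s)))"
      by (rule sum.group[symmetric]) (auto simp: Xs_def)
    also have "\<dots> \<le> (\<Sum>x\<in>Xs F s. (\<Sum>xh\<in>Fplus F s x. Q xh) * (log 2 (real (Ms s)) + \<sigma>))"
    proof (rule sum_mono)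
      fix x assume "x \<in> Xs F s"
      from fiber_bound[OF assms(8)[OF this]] Q0
      show "(\<Sum>xh\<in>{xh\<in>UNIV. F xh s = x}. Q xh * real (length (E xh s))) \<le> (\<Sum>xh\<in>Fplus F s x. Q xh) * (log 2 (real (Ms s)) + \<sigma>)"
        unfolding Fplus_def Ms_def N_def \<sigma>_def by simp
    qed
    also have "\<dots> = (\<Sum>x\<in>Xs F s. \<Sum>xh\<in>{xh\<in>UNIV. F xh s = x}. Q xh) * (log 2 (real (Ms s)) + \<sigma>)"
      unfolding Fplus_def by (simp add: sum_distrib_right)
    also have "(\<Sum>x\<in>Xs F s. \<Sum>xh\<in>{xh\<in>UNIV. F xh s = x}. Q xh) = 1"
      using Q1 by (subst sum.group) (auto simp: Xs_def)
    finally show ?thesis by simp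
  qed
  have "avg_len p Q E = (\<Sum>s\<in>UNIV. p s * (\<Sum>xh\<in>UNIV. Q xh * real (length (E xh s))))"
    unfolding avg_len_def by (subst sum.swap) (simp add: sum_distrib_left mult.assoc)
  also have "\<dots> \<le> (\<Sum>s\<in>UNIV. p s * (log 2 (real (Ms s)) + \<sigma>))"
    by (rule sum_mono, rule mult_left_mono[OF per_s]) (use assms(2) less_imp_le in auto)
  also have "\<dots> = (\<Sum>s\<in>UNIV. p s * log 2 (real (Ms s))) + \<sigma>"
    using assms(3) by (simp add: distrib_left sum.distrib sum_distrib_right[symmetric])
  also have "(\<Sum>s\<in>UNIV. p s * log 2 (real (Ms s))) = entropy p + KL_div p (qdist F)"
  proof -
    have "p s * log 2 (real (Ms s)) = p s * log 2 (p s / qdist F s) - p s * log 2 (p s)" for s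
    proof -
      have q: "qdist F s = real (Ns F s) / real N" unfolding qdist_def N_def by simp
      have "log 2 (p s / qdist F s) = log 2 (p s) - log 2 (qdist F s)"
        using assms(2)[of s] Nspos[of s] Npos q by (simp add: log_divide log_mult)
      also have "log 2 (qdist F s) = - log 2 (real (Ms s))"
        using q NMs[of s] Nspos[of s] Mspos[of s] by (simp add: log_divide log_mult)
      finally show ?thesis by (simp add: algebra_simps)
    qed
    thus ?thesis unfolding entropy_def KL_div_def by (simp add: sum_subtractf)
  qed
  finally show ?thesis unfolding \<sigma>_def .
qed

end
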